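(* Let $K$ be a connected 4-regular simple graph with an odd number of vertices, let $v,w$ be adjacent vertices of $K$ with no common neighbour, let the neighbours of $w$ be $v,a,b,c$ and the neighbours of $v$ be $w,d,e,f$, and let $R=K-\{v,w\}$. Let $p_1\cup p_2$ be a partition of $\{a,b,c,d,e,f\}$ where $p_1$ consists either of all of $\{a,b,c\}$ together with exactly one of $\{d,e,f\}$, or of all of $\{d,e,f\}$ together with exactly one of $\{a,b,c\}$. Let $x$ be the element of $p_1$ which is alone from its trio. Let $\tau\in\mathcal{R}_{p_1,p_2}$ and let $t$ be the tree of the 2-forest of $\tau$ containing the vertices of $p_1$. Then there is a unique vertex $y$ with the following properties: (1) either $y\in p_1$ and $y$ has degree 2 in $t$, or $y\notin p_1$ and $y$ has degree 3 in $t$; (2) removing $y$ from $t$ gives a component containing exactly two vertices of $p_1$ and a component containing exactly one vertex of $p_1$; (3) either $x=y$ or $x$ lies in one of the components of $t-y$ containing exactly one vertex of $p_1$.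
   Context: A spanning 2-forest is a spanning forest with exactly two trees (a tree may be a single vertex). For a bipartition $P=\{P_1,P_2\}$ of a subset of $V(R)$, $\mathcal{R}_P$ is the set of bipartitions of $E(R)$ such that one part is the edge set of a spanning tree of $R$ and the other is the edge set of a spanning 2-forest of $R$ with one tree containing all vertices of $P_1$ and the other containing all vertices of $P_2$. In $R$ the vertices $a,\dots,f$ have degree 3 and all other vertices have degree 4. *)

theory Defs
  imports Main
begin

definition simple_graph :: "'a set \<Rightarrow> 'a set set \<Rightarrow> bool" where
  "simple_graph V E \<longleftrightarrow> finite V \<and>
     (\<forall>e\<in>E. \<exists>u v. u \<noteq> v \<and> u \<in> V \<and> v \<in> V \<and> e = {u, v})"

definition nbrs :: "'a set set \<Rightarrow> 'a \<Rightarrow> 'a set" where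
  "nbrs E u = {z. {u, z} \<in> E}"

definition deg :: "'a set set \<Rightarrow> 'a \<Rightarrow> nat" where
  "deg E u = card {e \<in> E. u \<in> e}"

definition adjrel :: "'a set set \<Rightarrow> ('a \<times> 'a) set" where
  "adjrel E = {(u, z). {u, z} \<in> E}"

definition connected_graph :: "'a set \<Rightarrow> 'a set set \<Rightarrow> bool" where
  "connected_graph V E \<longleftrightarrow> V \<noteq> {} \<and> (\<forall>u\<in>V. \<forall>z\<in>V. (u, z) \<in> (adjrel E)\<^sup>*)"

definition comp :: "'a set \<Rightarrow> 'a set set \<Rightarrow> 'a \<Rightarrow> 'a set" where
  "comp V E x = {z \<in> V. (x, z) \<in> (adjrel E)\<^sup>*}"

definition components :: "'a set \<Rightarrow> 'a set set \<Rightarrow> 'a set set" where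
  "components V E = comp V E ` V"

definition acyclic_edges :: "'a set set \<Rightarrow> bool" where
  "acyclic_edges E \<longleftrightarrow> \<not> (\<exists>cs. length cs \<ge> 3 \<and> distinct cs \<and>
     (\<forall>i < length cs. {cs ! i, cs ! ((i + 1) mod length cs)} \<in> E))"

definition spanning_tree :: "'a set \<Rightarrow> 'a set set \<Rightarrow> 'a set set \<Rightarrow> bool" where
  "spanning_tree V E T \<longleftrightarrow> T \<subseteq> E \<and> acyclic_edges T \<and> connected_graph V T"

definition spanning_2forest :: "'a set \<Rightarrow> 'a set set \<Rightarrow> 'a set set \<Rightarrow> bool" where
  "spanning_2forest V E F \<longleftrightarrow> F \<subseteq> E \<and> acyclic_edges F \<and> card (components V F) = 2"

text \<open>The set R_P for a bipartition P = {P1, P2}; a bipartition of E(R) into a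
  spanning tree and a spanning 2-forest is recorded as the ordered pair (tree part,
  forest part).\<close>
definition RP :: "'a set \<Rightarrow> 'a set set \<Rightarrow> 'a set \<Rightarrow> 'a set \<Rightarrow> ('a set set \<times> 'a set set) set" where
  "RP V E P1 P2 = {(T, F). T \<union> F = E \<and> T \<inter> F = {} \<and> spanning_tree V E T \<and>
     spanning_2forest V E F \<and>
     (\<exists>C1\<in>components V F. \<exists>C2\<in>components V F. C1 \<noteq> C2 \<and> P1 \<subseteq> C1 \<and> P2 \<subseteq> C2)}"

end

theory Submission
  imports Defs "HOL-Library.Transitive_Closure_Table"
begin


lemma adj_sym: "(u,z) \<in> adjrel E \<longleftrightarrow> (z,u) \<in> adjrel E"
  by (auto simp: adjrel_def insert_commute)

lemma rt_sym: "(u,z) \<in> (adjrel E)\<^sup>* \<Longrightarrow> (z,u) \<in> (adjrel E)\<^sup>*"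
proof -
  assume h: "(u,z) \<in> (adjrel E)\<^sup>*"
  have "sym (adjrel E)" by (auto simp: sym_def adjrel_def insert_commute)
  hence "sym ((adjrel E)\<^sup>*)" by (rule sym_rtrancl)
  thus ?thesis using h by (meson symD)
qed

lemma adj_mono: "E1 \<subseteq> E2 \<Longrightarrow> (u,z) \<in> (adjrel E1)\<^sup>* \<Longrightarrow> (u,z) \<in> (adjrel E2)\<^sup>*"
proof -
  assume "E1 \<subseteq> E2" "(u,z) \<in> (adjrel E1)\<^sup>*"
  moreover have "adjrel E1 \<subseteq> adjrel E2" using \<open>E1 \<subseteq> E2\<close> by (auto simp: adjrel_def)
  ultimately show ?thesis using rtrancl_mono by blast
qed

lemma restrict:
  assumes "(z,u) \<in> (adjrel E)\<^sup>*"
    and "\<And>p q. {p,q} \<in> E \<Longrightarrow> (z,p) \<in> (adjrel E)\<^sup>* \<Longrightarrow> (z,q) \<in> (adjrel E)\<^sup>* \<Longrightarrow> Q {p,q}"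
  shows "(z,u) \<in> (adjrel {g\<in>E. Q g})\<^sup>*"
  using assms(1)
proof (induction rule: rtrancl_induct)
  case base thus ?case by simp
next
  case (step u u')
  have e: "{u,u'} \<in> E" using step.hyps(2) by (simp add: adjrel_def)
  have "(z,u') \<in> (adjrel E)\<^sup>*" using step.hyps by (rule rtrancl_into_rtrancl)
  then have "Q {u,u'}" using assms(2) e step.hyps(1) by blast
  hence "(u,u') \<in> adjrel {g\<in>E. Q g}" using e by (simp add: adjrel_def)
  thus ?case using step.IH by (meson rtrancl_into_rtrancl)
qed

lemma first_hit:
  assumes "(z,u) \<in> (adjrel E)\<^sup>*" "z \<noteq> y"
  shows "(u \<noteq> y \<and> (z,u) \<in> (adjrel {g\<in>E. y\<notin>g})\<^sup>*) \<or> (\<exists>n. (z,n) \<in> (adjrel {g\<in>E. y\<notin>g})\<^sup>* \<and> {n,y} \<in> E)"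
  using assms(1)
proof (induction rule: rtrancl_induct)
  case base show ?case using assms(2) by simp
next
  case (step u u')
  have e: "{u,u'} \<in> E" using step.hyps(2) by (simp add: adjrel_def)
  from step.IH show ?case
  proof
    assume h: "u \<noteq> y \<and> (z,u) \<in> (adjrel {g\<in>E. y\<notin>g})\<^sup>*"
    show ?thesis
    proof (cases "u' = y")
      case True then show ?thesis using h e by blast
    next
      case False
      then have "(u,u') \<in> adjrel {g\<in>E. y\<notin>g}" using e h by (auto simp: adjrel_def)
      then show ?thesis using h False by (meson rtrancl_into_rtrancl)
    qed
  next
    assume "\<exists>n. (z,n) \<in> (adjrel {g\<in>E. y\<notin>g})\<^sup>* \<and> {n,y} \<in> E" thus ?thesis by blast
  qed
qed

lemma path_nth: "rtrancl_path r x xs y \<Longrightarrow> i < length xs \<Longrightarrow> r ((x#xs)!i) (xs!i)"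
proof (induction arbitrary: i rule: rtrancl_path.induct)
  case (base a) thus ?case by simp
next
  case (step a b xs c)
  show ?case
  proof (cases i)
    case 0 thus ?thesis using step by simp
  next
    case (Suc j) thus ?thesis using step by simp
  qed
qed

lemma path_last: "rtrancl_path r x xs y \<Longrightarrow> xs \<noteq> [] \<Longrightarrow> last xs = y"
proof (induction rule: rtrancl_path.induct)
  case (base a) thus ?case by simp
next
  case (step a b ys c) thus ?case by (cases ys) (auto elim: rtrancl_path.cases)
qed

lemma bridge:
  assumes ac: "acyclic_edges E" and e: "{y,n} \<in> E" and yn: "y \<noteq> n"
  shows "(y,n) \<notin> (adjrel (E - {{y,n}}))\<^sup>*"
proof
  assume h: "(y,n) \<in> (adjrel (E - {{y,n}}))\<^sup>*"
  let ?r = "\<lambda>a b. (a,b) \<in> adjrel (E - {{y,n}})"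
  have "?r\<^sup>*\<^sup>* y n" using h by (simp add: rtranclp_rtrancl_eq)
  then obtain xs where "rtrancl_path ?r y xs n" by (auto simp: rtranclp_eq_rtrancl_path)
  then obtain ys where p: "rtrancl_path ?r y ys n" and d: "distinct (y#ys)"
    using rtrancl_path_distinct by metis
  have ne: "ys \<noteq> []" using p yn by (auto elim: rtrancl_path.cases)
  have ln: "last ys = n" using path_last p ne by metis
  have "ys \<noteq> [n]"
  proof
    assume "ys = [n]"
    then have "?r y n" using path_nth[OF p, of 0] by simp
    then show False by (simp add: adjrel_def)
  qed
  note nn = this
  have l2: "length ys \<ge> 2"
  proof (cases ys)
    case Nil with ne show ?thesis by simp
  next
    case (Cons a t)
    note c1 = this
    show ?thesis
    proof (cases t)
      case Nil
      then have "ys = [a]" using c1 by simp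
      with ln have "a = n" by simp
      with \<open>ys = [a]\<close> nn show ?thesis by simp
    next
      case (Cons b s) with c1 show ?thesis by simp
    qed
  qed
  define cs where "cs = y#ys"
  have l3: "length cs \<ge> 3" using l2 by (simp add: cs_def)
  have "\<forall>i < length cs. {cs!i, cs!((i+1) mod length cs)} \<in> E"
  proof (intro allI impI)
    fix i assume i: "i < length cs"
    show "{cs!i, cs!((i+1) mod length cs)} \<in> E"
    proof (cases "i < length ys")
      case True
      then have m: "(i+1) mod length cs = i+1" by (simp add: cs_def)
      have "?r (cs!i) (ys!i)" using path_nth[OF p True] by (simp add: cs_def)
      then show ?thesis using m by (simp add: cs_def adjrel_def)
    next
      case False
      then have ii: "i = length ys" using i by (simp add: cs_def)
      then have m: "(i+1) mod length cs = 0" by (simp add: cs_def)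
      have "cs!i = n" using ii ne ln by (simp add: cs_def last_conv_nth nth_Cons')
      then show ?thesis using m e by (simp add: cs_def insert_commute)
    qed
  qed
  then show False using ac d l3 unfolding acyclic_edges_def cs_def by blast
qed



locale tsetup =
  fixes Vt :: "'a set" and Et :: "'a set set" and P :: "'a set" and x :: 'a
  assumes finV: "finite Vt"
    and edg: "\<And>g. g \<in> Et \<Longrightarrow> \<exists>u z. u \<noteq> z \<and> u \<in> Vt \<and> z \<in> Vt \<and> g = {u,z}"
    and conn: "\<And>u. u \<in> Vt \<Longrightarrow> (x,u) \<in> (adjrel Et)\<^sup>*"
    and acyc: "acyclic_edges Et"
    and xP: "x \<in> P" and PV: "P \<subseteq> Vt" and cP: "card P = 4"
    and degP: "\<And>u. u \<in> P \<Longrightarrow> deg Et u \<le> 2"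
    and degV: "\<And>u. u \<in> Vt \<Longrightarrow> deg Et u \<le> 3"
begin

definition "Ey y = {g\<in>Et. y \<notin> g}"
definition "cm y z = comp (Vt - {y}) (Ey y) z"
definition "cs y = components (Vt - {y}) (Ey y)"
definition "G1 y \<longleftrightarrow> (y \<in> P \<and> deg Et y = 2) \<or> (y \<notin> P \<and> deg Et y = 3)"
definition "G2 y \<longleftrightarrow> (\<exists>C1\<in>cs y. \<exists>C2\<in>cs y. card (C1 \<inter> P) = 2 \<and> card (C2 \<inter> P) = 1)"
definition "G3 y \<longleftrightarrow> (x = y \<or> (\<exists>C\<in>cs y. x \<in> C \<and> card (C \<inter> P) = 1))"

lemma finP: "finite P" using PV finV finite_subset by blast
lemma xV: "x \<in> Vt" using xP PV by blast

lemma edge_sub: "g \<in> Et \<Longrightarrow> g \<subseteq> Vt" using edg by blast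

lemma finE: "finite Et"
proof -
  have "Et \<subseteq> Pow Vt" using edge_sub by blast
  thus ?thesis using finV finite_subset by blast
qed

lemma reach: "u \<in> Vt \<Longrightarrow> z \<in> Vt \<Longrightarrow> (u,z) \<in> (adjrel Et)\<^sup>*"
  by (meson conn rt_sym rtrancl_trans)

lemma reach_in: "(z,u) \<in> (adjrel (Ey y))\<^sup>* \<Longrightarrow> z \<in> Vt - {y} \<Longrightarrow> u \<in> Vt - {y}"
proof (induction rule: rtrancl_induct)
  case base thus ?case by simp
next
  case (step u u')
  then have "{u,u'} \<in> Et" "y \<notin> {u,u'}" by (auto simp: adjrel_def Ey_def)
  then show ?case using edge_sub by blast
qed

lemma cm_iff: "u \<in> cm y z \<longleftrightarrow> u \<in> Vt - {y} \<and> (z,u) \<in> (adjrel (Ey y))\<^sup>*"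
  by (simp add: cm_def comp_def)

lemma cm_self: "z \<in> Vt - {y} \<Longrightarrow> z \<in> cm y z" by (simp add: cm_iff)
lemma cm_sub: "cm y z \<subseteq> Vt - {y}" using cm_iff by blast

lemma cm_eq: "u \<in> cm y z \<Longrightarrow> cm y u = cm y z"
proof -
  assume "u \<in> cm y z"
  then have zu: "(z,u) \<in> (adjrel (Ey y))\<^sup>*" by (simp add: cm_iff)
  then have uz: "(u,z) \<in> (adjrel (Ey y))\<^sup>*" by (rule rt_sym)
  show ?thesis
  proof
    show "cm y u \<subseteq> cm y z" using zu by (auto simp: cm_iff intro: rtrancl_trans)
    show "cm y z \<subseteq> cm y u" using uz by (auto simp: cm_iff intro: rtrancl_trans)
  qed
qed

lemma cs_iff: "C \<in> cs y \<longleftrightarrow> (\<exists>z\<in>Vt-{y}. C = cm y z)"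
  by (auto simp: cs_def components_def cm_def)

lemma cm_disj: "cm y z \<noteq> cm y z' \<Longrightarrow> cm y z \<inter> cm y z' = {}"
  using cm_eq by blast

lemma cs_disj: assumes "C \<in> cs y" "C' \<in> cs y" "C \<noteq> C'" shows "C \<inter> C' = {}"
proof -
  obtain z z' where "C = cm y z" "C' = cm y z'" using assms(1,2) unfolding cs_iff by blast
  thus ?thesis using cm_disj assms(3) by blast
qed

lemma cs_sub: assumes "C \<in> cs y" shows "C \<subseteq> Vt - {y}"
proof -
  obtain z where "C = cm y z" using assms unfolding cs_iff by blast
  thus ?thesis using cm_sub by blast
qed

lemma notVt: "y \<notin> Vt \<Longrightarrow> C \<in> cs y \<Longrightarrow> C = Vt"
proof -
  assume y: "y \<notin> Vt" and C: "C \<in> cs y"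
  have V: "Vt - {y} = Vt" using y by blast
  have E: "Ey y = Et" using y edge_sub by (auto simp: Ey_def)
  obtain z where z: "z \<in> Vt" "C = cm y z" using C V unfolding cs_iff by auto
  show ?thesis unfolding z(2) cm_def comp_def V E using reach z(1) by blast
qed

lemma nb: "y \<in> Vt \<Longrightarrow> z \<in> Vt - {y} \<Longrightarrow> \<exists>n. {y,n} \<in> Et \<and> n \<in> cm y z"
proof -
  assume y: "y \<in> Vt" and z: "z \<in> Vt - {y}"
  have "(z,y) \<in> (adjrel Et)\<^sup>*" using reach y z by blast
  from first_hit[OF this, of y] z obtain n where
    n: "(z,n) \<in> (adjrel (Ey y))\<^sup>*" "{n,y} \<in> Et" by (auto simp: Ey_def)
  have "n \<in> cm y z" using n(1) reach_in z by (simp add: cm_iff)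
  thus ?thesis using n(2) by (auto simp: insert_commute)
qed

lemma deg_ge:
  assumes y: "y \<in> Vt" and Z: "Z \<subseteq> Vt - {y}" and inj: "inj_on (cm y) Z"
  shows "card Z \<le> deg Et y"
proof -
  have "\<forall>z\<in>Z. \<exists>n. {y,n} \<in> Et \<and> n \<in> cm y z" using nb y Z by blast
  then obtain nbf where nbf: "\<forall>z\<in>Z. {y, nbf z} \<in> Et \<and> nbf z \<in> cm y z"
    using bchoice[of Z "\<lambda>z n. {y,n} \<in> Et \<and> n \<in> cm y z"] by blast
  have "inj_on (\<lambda>z. {y, nbf z}) Z"
  proof (rule inj_onI)
    fix z1 z2 assume z1: "z1 \<in> Z" and z2: "z2 \<in> Z" and eq: "{y, nbf z1} = {y, nbf z2}"
    have "nbf z1 \<noteq> y" "nbf z2 \<noteq> y" using nbf z1 z2 cm_sub by blast+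
    then have "nbf z1 = nbf z2" using eq by (auto simp: doubleton_eq_iff)
    moreover have "cm y (nbf z1) = cm y z1" using nbf z1 cm_eq by blast
    moreover have "cm y (nbf z2) = cm y z2" using nbf z2 cm_eq by blast
    ultimately have "cm y z1 = cm y z2" by simp
    then show "z1 = z2" using inj z1 z2 by (auto dest: inj_onD)
  qed
  moreover have "(\<lambda>z. {y, nbf z}) ` Z \<subseteq> {g\<in>Et. y \<in> g}" using nbf by auto
  moreover have "finite {g\<in>Et. y \<in> g}" using finE by simp
  ultimately show ?thesis unfolding deg_def by (rule card_inj_on_le)
qed

lemma cross:
  assumes y1: "y1 \<in> Vt" and y2: "y2 \<in> Vt - {y1}" and z: "z \<in> Vt - {y1}" and nz: "y2 \<notin> cm y1 z"
  shows "z \<in> cm y2 y1"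
proof -
  obtain n where n: "{y1,n} \<in> Et" "n \<in> cm y1 z" using nb[OF y1 z] by blast
  have zn: "(z,n) \<in> (adjrel (Ey y1))\<^sup>*" using n(2) by (simp add: cm_iff)
  have "(z,n) \<in> (adjrel {g\<in>Ey y1. y2 \<notin> g})\<^sup>*"
  proof (rule restrict[OF zn])
    fix p q assume "{p,q} \<in> Ey y1" "(z,p) \<in> (adjrel (Ey y1))\<^sup>*" "(z,q) \<in> (adjrel (Ey y1))\<^sup>*"
    then have "p \<in> cm y1 z" "q \<in> cm y1 z" using reach_in[OF _ z] by (auto simp: cm_iff)
    then show "y2 \<notin> {p,q}" using nz by auto
  qed
  moreover have "{g\<in>Ey y1. y2 \<notin> g} \<subseteq> Ey y2" by (auto simp: Ey_def)
  ultimately have zn2: "(z,n) \<in> (adjrel (Ey y2))\<^sup>*" by (rule adj_mono[rotated])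
  have "n \<noteq> y2" using n(2) nz by auto
  then have "{n,y1} \<in> Ey y2" using n(1) y2 by (auto simp: Ey_def insert_commute)
  then have "(n,y1) \<in> adjrel (Ey y2)" by (simp add: adjrel_def)
  with zn2 have zy: "(z,y1) \<in> (adjrel (Ey y2))\<^sup>*" by (rule rtrancl_into_rtrancl)
  have "z \<noteq> y2" using cm_self[OF z] nz by auto
  then have "y1 \<in> cm y2 z" using zy y1 y2 by (auto simp: cm_iff)
  then have "cm y2 y1 = cm y2 z" by (rule cm_eq)
  moreover have "z \<in> cm y2 z" using z \<open>z \<noteq> y2\<close> by (simp add: cm_iff)
  ultimately show ?thesis by simp
qed

end


lemma inj3: "f a \<noteq> f b \<Longrightarrow> f a \<noteq> f c \<Longrightarrow> f b \<noteq> f c \<Longrightarrow> inj_on f {a,b,c}"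
  by (auto simp: inj_on_def)
lemma inj2: "f a \<noteq> f b \<Longrightarrow> inj_on f {a,b}"
  by (auto simp: inj_on_def)
lemma inj4: "f a \<noteq> f b \<Longrightarrow> f a \<noteq> f c \<Longrightarrow> f b \<noteq> f c \<Longrightarrow> f a \<noteq> f d \<Longrightarrow> f b \<noteq> f d \<Longrightarrow> f c \<noteq> f d \<Longrightarrow> inj_on f {a,b,c,d}"
  by (auto simp: inj_on_def)

context tsetup begin

lemma G2_Vt: "G2 y \<Longrightarrow> y \<in> Vt"
proof (rule ccontr)
  assume g: "G2 y" and y: "y \<notin> Vt"
  from g obtain C1 where C1: "C1 \<in> cs y" "card (C1 \<inter> P) = 2" unfolding G2_def by blast
  have "C1 = Vt" using notVt[OF y C1(1)] .
  then have "card (C1 \<inter> P) = 4" using PV cP by (simp add: Int_absorb1)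
  with C1(2) show False by simp
qed

lemma G2_small: assumes g: "G2 y" and C: "C \<in> cs y" shows "card (C \<inter> P) \<le> 2"
proof -
  obtain C1 C2 where c: "C1 \<in> cs y" "C2 \<in> cs y" "card (C1\<inter>P) = 2" "card (C2\<inter>P) = 1"
    using g unfolding G2_def by blast
  show ?thesis
  proof (cases "C = C1 \<or> C = C2")
    case True thus ?thesis using c by auto
  next
    case False
    have "C1 \<noteq> C2" using c(3,4) by auto
    then have d12: "C1 \<inter> C2 = {}" using cs_disj[OF c(1) c(2)] by simp
    have d1: "C \<inter> C1 = {}" using cs_disj[OF C c(1)] False by auto
    have d2: "C \<inter> C2 = {}" using cs_disj[OF C c(2)] False by auto
    have e1: "card ((C\<inter>P) \<union> (C1\<inter>P)) = card (C\<inter>P) + card (C1\<inter>P)"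
      by (rule card_Un_disjoint) (use finP d1 in auto)
    have e2: "card ((C\<inter>P) \<union> (C1\<inter>P) \<union> (C2\<inter>P)) = card ((C\<inter>P) \<union> (C1\<inter>P)) + card (C2\<inter>P)"
      by (rule card_Un_disjoint) (use finP d2 d12 in auto)
    have "card ((C\<inter>P) \<union> (C1\<inter>P) \<union> (C2\<inter>P)) \<le> card P"
      by (rule card_mono) (use finP in auto)
    then show ?thesis using e1 e2 c cP by simp
  qed
qed

lemma G3_two: assumes "G3 y" "B \<in> cs y" "card (B\<inter>P) = 2" shows "x \<notin> B"
proof
  assume xB: "x \<in> B"
  from assms(1) consider "x = y" | C where "C \<in> cs y" "x \<in> C" "card (C\<inter>P) = 1"
    unfolding G3_def by blast
  then show False
  proof cases
    case 1 then show False using cs_sub[OF assms(2)] xB by auto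
  next
    case 2
    then have "C = B" using cs_disj[OF 2(1) assms(2)] xB by auto
    then show False using 2(3) assms(3) by simp
  qed
qed

lemma uniq: assumes "G2 y1" "G3 y1" "G2 y2" "G3 y2" shows "y1 = y2"
proof (rule ccontr)
  assume ne: "y1 \<noteq> y2"
  have v1: "y1 \<in> Vt" "y2 \<in> Vt" using G2_Vt assms by auto
  define B where "B = cm y1 y2"
  define B' where "B' = cm y2 y1"
  have Bc: "B \<in> cs y1" unfolding B_def cs_iff using v1 ne by auto
  have B'c: "B' \<in> cs y2" unfolding B'_def cs_iff using v1 ne by auto
  have sub: "P - B \<subseteq> B'"
  proof
    fix q assume q: "q \<in> P - B"
    show "q \<in> B'"
    proof (cases "q = y1")
      case True thus ?thesis using v1 ne by (simp add: B'_def cm_iff)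
    next
      case False
      have qV: "q \<in> Vt - {y1}" using q PV False by auto
      have "y2 \<notin> cm y1 q"
      proof
        assume "y2 \<in> cm y1 q"
        then have "cm y1 y2 = cm y1 q" by (rule cm_eq)
        then have "q \<in> B" using cm_self[OF qV] by (simp add: B_def)
        with q show False by simp
      qed
      moreover have "y2 \<in> Vt - {y1}" using v1 ne by auto
      ultimately show ?thesis using cross[OF v1(1) _ qV] unfolding B'_def by blast
    qed
  qed
  have k1: "card (B\<inter>P) \<le> 2" using G2_small[OF assms(1) Bc] .
  have k2: "card (B'\<inter>P) \<le> 2" using G2_small[OF assms(3) B'c] .
  have "card ((P\<inter>B) \<union> (P - B)) = card (P\<inter>B) + card (P - B)"
    by (rule card_Un_disjoint) (use finP in auto)
  moreover have "(P\<inter>B) \<union> (P - B) = P" by blast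
  moreover have "card (P-B) \<le> card (B'\<inter>P)" by (rule card_mono) (use finP sub in auto)
  ultimately have "card (B\<inter>P) = 2" "card (B'\<inter>P) = 2" using k1 k2 cP by (simp_all add: Int_commute)
  then have "x \<notin> B" "x \<notin> B'" using G3_two assms(2,4) Bc B'c by auto
  then show False using sub xP by auto
qed

definition "Inv y \<longleftrightarrow> y \<in> Vt \<and> (y = x \<or> (x \<in> Vt - {y} \<and> cm y x \<inter> P = {x}))"
definition "X y = (if y = x then {x} else insert y (cm y x))"

lemma xsep: assumes I: "Inv y" and q: "q \<in> P - {x,y}" shows "x \<notin> cm y q"
proof
  assume xq: "x \<in> cm y q"
  have qV: "q \<in> Vt - {y}" using q PV by auto
  show False
  proof (cases "y = x")
    case True then show False using xq cm_sub by auto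
  next
    case False
    then have h: "x \<in> Vt - {y}" "cm y x \<inter> P = {x}" using I unfolding Inv_def by auto
    have "cm y x = cm y q" using cm_eq[OF xq] .
    then have "q \<in> cm y x" using cm_self[OF qV] by simp
    then show False using h(2) q by auto
  qed
qed

lemma split_good:
  assumes I: "Inv y" and nP: "\<not>(y \<in> P \<and> y \<noteq> x)" and R: "P - {x,y} = {p,q,r}"
    and dist: "p\<noteq>q" "p\<noteq>r" "q\<noteq>r" and rp: "r \<in> cm y p" and qp: "q \<notin> cm y p"
  shows "G1 y \<and> G2 y \<and> G3 y"
proof -
  have yV: "y \<in> Vt" using I Inv_def by auto
  have pP: "p \<in> P - {x,y}" "q \<in> P - {x,y}" "r \<in> P - {x,y}" using R by auto
  have pV: "p \<in> Vt - {y}" "q \<in> Vt - {y}" "r \<in> Vt - {y}" using pP PV by auto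
  have xp: "x \<notin> cm y p" "x \<notin> cm y q" using xsep[OF I] pP by auto
  have pq: "cm y p \<noteq> cm y q" using cm_self[OF pV(2)] qp by auto
  have C1: "cm y p \<inter> P = {p,r}"
  proof
    show "cm y p \<inter> P \<subseteq> {p,r}"
    proof
      fix u assume u: "u \<in> cm y p \<inter> P"
      then have "u \<noteq> y" "u \<noteq> x" using cm_sub xp by auto
      then have "u \<in> {p,q,r}" using u R by auto
      then show "u \<in> {p,r}" using u qp by auto
    qed
    show "{p,r} \<subseteq> cm y p \<inter> P" using cm_self[OF pV(1)] rp pP by auto
  qed
  have C2: "cm y q \<inter> P = {q}"
  proof
    show "cm y q \<inter> P \<subseteq> {q}"
    proof
      fix u assume u: "u \<in> cm y q \<inter> P"
      then have "u \<noteq> y" "u \<noteq> x" using cm_sub xp by auto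
      then have "u \<in> {p,q,r}" using u R by auto
      moreover have "u \<noteq> p"
      proof
        assume "u = p"
        then have "cm y p = cm y q" using cm_eq u by auto
        then show False using pq by simp
      qed
      moreover have "u \<noteq> r"
      proof
        assume "u = r"
        then have "cm y r = cm y q" using cm_eq u by auto
        moreover have "cm y r = cm y p" using cm_eq[OF rp] .
        ultimately show False using pq by simp
      qed
      ultimately show "u \<in> {q}" by auto
    qed
    show "{q} \<subseteq> cm y q \<inter> P" using cm_self[OF pV(2)] pP by auto
  qed
  have cs1: "cm y p \<in> cs y" "cm y q \<in> cs y" using pV unfolding cs_iff by auto
  have cc: "card (cm y p \<inter> P) = 2" "card (cm y q \<inter> P) = 1" using C1 C2 dist by simp_all
  have G2: "G2 y" unfolding G2_def using cs1 cc by blast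
  show ?thesis
  proof (cases "y = x")
    case True
    have "2 \<le> deg Et y"
    proof -
      have "card {p,q} \<le> deg Et y"
        by (rule deg_ge[OF yV]) (use pV inj2[of "cm y" p q, OF pq] in auto)
      then show ?thesis using dist by simp
    qed
    moreover have "deg Et y \<le> 2" using degP xP True by simp
    ultimately have "G1 y" unfolding G1_def using xP True by simp
    then show ?thesis using G2 True unfolding G3_def by simp
  next
    case False
    then have h: "x \<in> Vt - {y}" "cm y x \<inter> P = {x}" using I unfolding Inv_def by auto
    have yP: "y \<notin> P" using nP False by auto
    have xx: "x \<in> cm y x" using cm_self[OF h(1)] .
    have px: "cm y p \<noteq> cm y x" "cm y q \<noteq> cm y x" using xx xp by auto
    have xpq: "x \<noteq> p" "x \<noteq> q" using pP by auto
    have "card {p,q,x} \<le> deg Et y"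
      by (rule deg_ge[OF yV]) (use pV h inj3[of "cm y" p q x, OF pq px] in auto)
    then have "3 \<le> deg Et y" using dist xpq by simp
    moreover have "deg Et y \<le> 3" using degV yV by simp
    ultimately have "G1 y" unfolding G1_def using yP by simp
    moreover have "G3 y"
    proof -
      have "cm y x \<in> cs y" using h(1) unfolding cs_iff by blast
      moreover have "card (cm y x \<inter> P) = 1" using h(2) by simp
      ultimately show ?thesis unfolding G3_def using xx by blast
    qed
    ultimately show ?thesis using G2 by simp
  qed
qed

end


context tsetup begin

lemma exist_from: "Inv y \<Longrightarrow> \<exists>y'. G1 y' \<and> G2 y' \<and> G3 y'"
proof (induction "card (Vt - X y)" arbitrary: y rule: less_induct)
  case less
  note I = less.prems
  have yV: "y \<in> Vt" using I Inv_def by auto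
  define R where "R = P - {x,y}"
  have RV: "R \<subseteq> Vt - {y}" using PV by (auto simp: R_def)
  have Rx: "\<And>q. q \<in> R \<Longrightarrow> x \<notin> cm y q" using xsep[OF I] by (auto simp: R_def)
  have RP: "R \<subseteq> P" "x \<notin> R" "y \<notin> R" by (auto simp: R_def)
  have finR: "finite R" using finP RP(1) finite_subset by blast
  have cR: "card R = (if y \<in> P \<and> y \<noteq> x then 2 else 3)"
  proof (cases "y \<in> P \<and> y \<noteq> x")
    case True
    have "card (P - {x,y}) = card P - card {x,y}"
      by (rule card_Diff_subset) (use True xP in auto)
    moreover have "card {x,y} = 2" using True by auto
    ultimately show ?thesis using True cP by (simp add: R_def)
  next
    case False
    then have "R = P - {x}" by (auto simp: R_def)
    then have "card R = card P - 1" using xP by (simp add: card_Diff_singleton)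
    then show ?thesis using False cP by simp
  qed
  show ?case
  proof (cases "\<exists>q1\<in>R. \<exists>q2\<in>R. q2 \<notin> cm y q1")
    case False
    then have all: "\<forall>q1\<in>R. \<forall>q2\<in>R. q2 \<in> cm y q1" by blast
    have "R \<noteq> {}" using cR by (auto split: if_splits)
    then obtain q0 where q0: "q0 \<in> R" by blast
    define D where "D = cm y q0"
    have RD: "R \<subseteq> D" using all q0 by (auto simp: D_def)
    have xD: "x \<notin> D" using Rx q0 by (simp add: D_def)
    have q0V: "q0 \<in> Vt - {y}" using q0 RV by auto
    have Dc: "D \<in> cs y" unfolding D_def cs_iff using q0V by blast
    show ?thesis
    proof (cases "y \<in> P \<and> y \<noteq> x")
      case True
      then have h: "x \<in> Vt - {y}" "cm y x \<inter> P = {x}" using I unfolding Inv_def by auto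
      have DP: "D \<inter> P = R"
      proof
        show "D \<inter> P \<subseteq> R"
        proof
          fix u assume u: "u \<in> D \<inter> P"
          then have "u \<noteq> y" using cm_sub by (auto simp: D_def)
          then show "u \<in> R" using u xD by (auto simp: R_def)
        qed
        show "R \<subseteq> D \<inter> P" using RD RP by auto
      qed
      have xc: "cm y x \<in> cs y" using h(1) unfolding cs_iff by blast
      have xx: "x \<in> cm y x" using cm_self[OF h(1)] .
      have c1: "card (D \<inter> P) = 2" using DP cR True by simp
      have c2: "card (cm y x \<inter> P) = 1" using h(2) by simp
      have G2: "G2 y" unfolding G2_def using Dc xc c1 c2 by blast
      have G3: "G3 y" unfolding G3_def using xc xx c2 by blast
      have ne: "cm y q0 \<noteq> cm y x" using xD xx by (auto simp: D_def)
      have "card {q0,x} \<le> deg Et y"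
        by (rule deg_ge[OF yV]) (use q0V h inj2[of "cm y" q0 x, OF ne] in auto)
      moreover have "q0 \<noteq> x" using RP q0 by auto
      ultimately have "2 \<le> deg Et y" by simp
      moreover have "deg Et y \<le> 2" using degP True by simp
      ultimately have "G1 y" unfolding G1_def using True by simp
      then show ?thesis using G2 G3 by blast
    next
      case False
      obtain n where n: "{y,n} \<in> Et" "n \<in> D" using nb[OF yV q0V] by (auto simp: D_def)
      have nV: "n \<in> Vt - {y}" using n(2) cm_sub by (auto simp: D_def)
      have ny: "y \<noteq> n" using nV by auto
      have nD: "cm y n = D" using cm_eq[OF n(2)[unfolded D_def]] by (simp add: D_def)
      have nxc: "y \<noteq> x \<Longrightarrow> n \<notin> cm y x"
      proof
        assume yx: "y \<noteq> x" and nx: "n \<in> cm y x"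
        have hx: "x \<in> Vt - {y}" using I yx unfolding Inv_def by auto
        have "cm y n = cm y x" using cm_eq[OF nx] .
        then have "x \<in> D" using nD cm_self[OF hx] by simp
        then show False using xD by simp
      qed
      have nx: "n \<noteq> x"
      proof (cases "y = x")
        case True then show ?thesis using ny by simp
      next
        case False then show ?thesis using xD n(2) by auto
      qed
      have xVn: "x \<in> Vt - {n}" using xV nx by auto
      have yVn: "y \<in> Vt - {n}" using yV ny by auto
      have yin: "y \<in> cm n x"
      proof (cases "y = x")
        case True then show ?thesis using cm_self[OF xVn] by simp
      next
        case False
        have hx: "x \<in> Vt - {y}" using I False unfolding Inv_def by auto
        have "x \<in> cm n y" by (rule cross[OF yV nV hx nxc[OF False]])
        then have "cm n x = cm n y" by (rule cm_eq)
        then show ?thesis using cm_self[OF yVn] by simp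
      qed
      have cny: "cm n y = cm n x" using cm_eq[OF yin] .
      have Invn: "Inv n"
      proof -
        have "cm n x \<inter> P \<subseteq> {x}"
        proof
          fix q assume q: "q \<in> cm n x \<inter> P"
          show "q \<in> {x}"
          proof (rule ccontr)
            assume qx: "q \<notin> {x}"
            have "q \<noteq> y"
            proof (cases "y = x")
              case True then show ?thesis using qx by simp
            next
              case False then have "y \<notin> P" using \<open>\<not> (y \<in> P \<and> y \<noteq> x)\<close> by simp
              then show ?thesis using q by auto
            qed
            then have qR: "q \<in> R" using q qx by (auto simp: R_def)
            then have "q \<in> cm y n" using RD nD by auto
            then have a1: "(n,q) \<in> (adjrel (Ey y))\<^sup>*" by (simp add: cm_iff)
            have "q \<in> cm n y" using q cny by auto
            then have a2: "(y,q) \<in> (adjrel (Ey n))\<^sup>*" by (simp add: cm_iff)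
            have s1: "Ey y \<subseteq> Et - {{y,n}}" by (auto simp: Ey_def)
            have s2: "Ey n \<subseteq> Et - {{y,n}}" by (auto simp: Ey_def)
            have b1: "(q,n) \<in> (adjrel (Et - {{y,n}}))\<^sup>*" using adj_mono[OF s1 rt_sym[OF a1]] .
            have b2: "(y,q) \<in> (adjrel (Et - {{y,n}}))\<^sup>*" using adj_mono[OF s2 a2] .
            have "(y,n) \<in> (adjrel (Et - {{y,n}}))\<^sup>*" using rtrancl_trans[OF b2 b1] .
            then show False using bridge[OF acyc n(1) ny] by simp
          qed
        qed
        moreover have "x \<in> cm n x" using cm_self[OF xVn] .
        ultimately have "cm n x \<inter> P = {x}" using xP by auto
        then show ?thesis unfolding Inv_def using nV nx xVn by auto
      qed
      have Xn: "X n = insert n (cm n x)" using nx by (simp add: X_def)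
      have XyXn: "X y \<subseteq> X n"
      proof (cases "y = x")
        case True
        then show ?thesis using Xn cm_self[OF xVn] by (auto simp: X_def)
      next
        case False
        have "cm y x \<subseteq> cm n x"
        proof
          fix z assume z: "z \<in> cm y x"
          have zV: "z \<in> Vt - {y}" using z cm_sub by auto
          have "cm y z = cm y x" using cm_eq[OF z] .
          then have "n \<notin> cm y z" using nxc[OF False] by simp
          then have "z \<in> cm n y" by (rule cross[OF yV nV zV])
          then show "z \<in> cm n x" using cny by simp
        qed
        then show ?thesis using Xn yin False by (auto simp: X_def)
      qed
      have nXy: "n \<notin> X y"
      proof (cases "y = x")
        case True then show ?thesis using nx by (simp add: X_def)
      next
        case False then show ?thesis using ny nxc[OF False] by (simp add: X_def)
      qed
      have XnV: "X n \<subseteq> Vt" using Xn nV cm_sub by auto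
      have "Vt - X n \<subset> Vt - X y" using XyXn nXy XnV nV Xn by blast
      then have meas: "card (Vt - X n) < card (Vt - X y)"
        by (rule psubset_card_mono[rotated]) (use finV in simp)
      show ?thesis using less.hyps[OF meas Invn] .
    qed
  next
    case True
    then obtain q1 q2 where q: "q1 \<in> R" "q2 \<in> R" "q2 \<notin> cm y q1" by blast
    have qV: "q1 \<in> Vt - {y}" "q2 \<in> Vt - {y}" using q RV by auto
    have q12: "q1 \<noteq> q2" using q(3) cm_self[OF qV(1)] by auto
    have neq12: "cm y q1 \<noteq> cm y q2" using q(3) cm_self[OF qV(2)] by auto
    show ?thesis
    proof (cases "y \<in> P \<and> y \<noteq> x")
      case True
      then have h: "x \<in> Vt - {y}" "cm y x \<inter> P = {x}" using I unfolding Inv_def by auto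
      have xx: "x \<in> cm y x" using cm_self[OF h(1)] .
      have nx: "cm y q1 \<noteq> cm y x" "cm y q2 \<noteq> cm y x" using Rx q xx by auto
      have "card {q1,q2,x} \<le> deg Et y"
        by (rule deg_ge[OF yV]) (use qV h inj3[of "cm y" q1 q2 x, OF neq12 nx] in auto)
      moreover have "q1 \<noteq> x" "q2 \<noteq> x" using q RP by auto
      moreover have "card {q1,q2,x} = 3" using q12 calculation(2,3) by simp
      moreover have "deg Et y \<le> 2" using degP True by simp
      ultimately show ?thesis by simp
    next
      case False
      have c3: "card R = 3" using cR False by simp
      have "\<not> R \<subseteq> {q1,q2}"
      proof
        assume "R \<subseteq> {q1,q2}"
        then have "card R \<le> card {q1,q2}" by (rule card_mono[rotated]) simp
        moreover have "card {q1,q2} \<le> 2" by (simp add: card_insert_if)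
        ultimately show False using c3 by simp
      qed
      then obtain q3 where q3: "q3 \<in> R" "q3 \<noteq> q1" "q3 \<noteq> q2" by blast
      have q3V: "q3 \<in> Vt - {y}" using q3 RV by auto
      have Req: "R = {q1,q2,q3}"
      proof -
        have "{q1,q2,q3} \<subseteq> R" using q q3 by auto
        moreover have "card {q1,q2,q3} = card R" using c3 q12 q3 by simp
        ultimately show ?thesis using card_subset_eq[OF finR] by blast
      qed
      show ?thesis
      proof (cases "q3 \<in> cm y q1")
        case True
        have "G1 y \<and> G2 y \<and> G3 y"
          by (rule split_good[OF I False, of q1 q2 q3]) (use Req q12 q3 True q in \<open>auto simp: R_def\<close>)
        then show ?thesis by blast
      next
        case F1: False
        show ?thesis
        proof (cases "q3 \<in> cm y q2")
          case True
          have "q1 \<notin> cm y q2"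
          proof
            assume "q1 \<in> cm y q2"
            then have "cm y q1 = cm y q2" by (rule cm_eq)
            then show False using neq12 by simp
          qed
          then have "G1 y \<and> G2 y \<and> G3 y"
            by (intro split_good[OF I False, of q2 q1 q3]) (use Req q12 q3 True in \<open>auto simp: R_def\<close>)
          then show ?thesis by blast
        next
          case F2: False
          have n13: "cm y q1 \<noteq> cm y q3" using F1 cm_self[OF q3V] by auto
          have n23: "cm y q2 \<noteq> cm y q3" using F2 cm_self[OF q3V] by auto
          have c3': "card {q1,q2,q3} = 3" using q12 q3 by simp
          show ?thesis
          proof (cases "y = x")
            case True
            have "card {q1,q2,q3} \<le> deg Et y"
              by (rule deg_ge[OF yV]) (use qV q3V inj3[of "cm y" q1 q2 q3, OF neq12 n13 n23] in auto)
            moreover have "deg Et y \<le> 2" using degP True xP by simp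
            ultimately show ?thesis using c3' by simp
          next
            case yx: False
            then have h: "x \<in> Vt - {y}" "cm y x \<inter> P = {x}" using I unfolding Inv_def by auto
            have xx: "x \<in> cm y x" using cm_self[OF h(1)] .
            have nx: "cm y q1 \<noteq> cm y x" "cm y q2 \<noteq> cm y x" "cm y q3 \<noteq> cm y x"
              using Rx q q3 xx by auto
            have "card {q1,q2,q3,x} \<le> deg Et y"
              by (rule deg_ge[OF yV])
                (use qV q3V h inj4[of "cm y" q1 q2 q3 x, OF neq12 n13 n23 nx] in auto)
            moreover have "q1 \<noteq> x" "q2 \<noteq> x" "q3 \<noteq> x" using q q3 RP by auto
            moreover have "card {q1,q2,q3,x} = 4" using q12 q3 calculation(2,3,4) by simp
            moreover have "deg Et y \<le> 3" using degV yV by simp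
            ultimately show ?thesis by simp
          qed
        qed
      qed
    qed
  qed
qed

theorem main: "\<exists>!y. G1 y \<and> G2 y \<and> G3 y"
proof -
  have "Inv x" unfolding Inv_def using xV by simp
  then obtain y where "G1 y \<and> G2 y \<and> G3 y" using exist_from by blast
  then show ?thesis using uniq by blast
qed

end


lemma card_nbrs:
  assumes E: "\<forall>g\<in>E. \<exists>p q. p \<noteq> q \<and> g = {p,q}"
  shows "card (nbrs E u) = deg E u"
proof -
  have inj: "inj_on (\<lambda>z. {u,z}) (nbrs E u)" by (auto simp: inj_on_def doubleton_eq_iff)
  have "(\<lambda>z. {u,z}) ` nbrs E u = {g\<in>E. u\<in>g}"
  proof
    show "(\<lambda>z. {u,z}) ` nbrs E u \<subseteq> {g\<in>E. u\<in>g}" by (auto simp: nbrs_def)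
    show "{g\<in>E. u\<in>g} \<subseteq> (\<lambda>z. {u,z}) ` nbrs E u"
    proof
      fix g assume g: "g \<in> {g\<in>E. u\<in>g}"
      then obtain p q where pq: "g = {p,q}" using E by blast
      have "u = p \<or> u = q" using g pq by auto
      then show "g \<in> (\<lambda>z. {u,z}) ` nbrs E u"
      proof
        assume "u = p"
        then have "q \<in> nbrs E u" "g = {u,q}" using g pq by (auto simp: nbrs_def)
        then show ?thesis by blast
      next
        assume "u = q"
        then have "p \<in> nbrs E u" "g = {u,p}" using g pq by (auto simp: nbrs_def insert_commute)
        then show ?thesis by blast
      qed
    qed
  qed
  then show ?thesis using card_image[OF inj] by (simp add: deg_def)
qed

lemma acyc_mono: "acyclic_edges F \<Longrightarrow> E' \<subseteq> F \<Longrightarrow> acyclic_edges E'"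
  unfolding acyclic_edges_def by blast

lemma card4_distinct: "card {a,b,c,d} = 4 \<Longrightarrow> distinct [a,b,c,d]"
  using card_distinct[of "[a,b,c,d]"] by simp

theorem lemma4p3:
  fixes V :: "'a set" and E :: "'a set set"
    and v w a b c d e f x :: 'a and p1 p2 :: "'a set" and T F :: "'a set set"
  assumes K: "simple_graph V E"
    and conn: "connected_graph V E"
    and reg4: "\<forall>u\<in>V. deg E u = 4"
    and odd: "odd (card V)"
    and vV: "v \<in> V" and wV: "w \<in> V"
    and vw: "{v, w} \<in> E"
    and nocommon: "nbrs E v \<inter> nbrs E w = {}"
    and Nw: "nbrs E w = {v, a, b, c}"
    and Nv: "nbrs E v = {w, d, e, f}"
    and p1: "(p1 = {a, b, c, x} \<and> x \<in> {d, e, f}) \<or> (p1 = {d, e, f, x} \<and> x \<in> {a, b, c})"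
    and p2: "p2 = {a, b, c, d, e, f} - p1"
    and tau: "(T, F) \<in> RP (V - {v, w}) {g \<in> E. v \<notin> g \<and> w \<notin> g} p1 p2"
  shows "let Vt = comp (V - {v, w}) F x;
             Et = {g \<in> F. g \<subseteq> Vt}
         in \<exists>!y. ((y \<in> p1 \<and> deg Et y = 2) \<or> (y \<notin> p1 \<and> deg Et y = 3)) \<and>
                 (\<exists>C1\<in>components (Vt - {y}) {g \<in> Et. y \<notin> g}.
                    \<exists>C2\<in>components (Vt - {y}) {g \<in> Et. y \<notin> g}.
                       card (C1 \<inter> p1) = 2 \<and> card (C2 \<inter> p1) = 1) \<and>
                 (x = y \<or> (\<exists>C\<in>components (Vt - {y}) {g \<in> Et. y \<notin> g}.
                             x \<in> C \<and> card (C \<inter> p1) = 1))"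
proof -
  define VR where "VR = V - {v,w}"
  define ER where "ER = {g\<in>E. v \<notin> g \<and> w \<notin> g}"
  define Vt where "Vt = comp VR F x"
  define Et where "Et = {g\<in>F. g \<subseteq> Vt}"
  have TF: "T \<inter> F = {}" "T \<subseteq> ER" "connected_graph VR T" "F \<subseteq> ER" "acyclic_edges F"
    and C: "\<exists>C1\<in>components VR F. p1 \<subseteq> C1"
    using tau unfolding RP_def spanning_tree_def spanning_2forest_def VR_def ER_def by auto
  have finV: "finite V" and Eedg: "\<And>g. g \<in> E \<Longrightarrow> \<exists>u z. u\<noteq>z \<and> u\<in>V \<and> z\<in>V \<and> g={u,z}"
    using K unfolding simple_graph_def by auto
  have finE: "finite E"
  proof -
    have "E \<subseteq> Pow V" using Eedg by blast
    thus ?thesis using finV finite_subset by blast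
  qed
  have E2: "\<forall>g\<in>E. \<exists>p q. p \<noteq> q \<and> g = {p,q}" using Eedg by blast
  have edgV: "\<And>p q. {p,q} \<in> E \<Longrightarrow> p \<in> V \<and> q \<in> V \<and> p \<noteq> q"
  proof -
    fix p q assume "{p,q} \<in> E"
    then obtain u z where "u\<noteq>z" "u\<in>V" "z\<in>V" "{p,q}={u,z}" using Eedg by blast
    then show "p \<in> V \<and> q \<in> V \<and> p \<noteq> q" by (auto simp: doubleton_eq_iff)
  qed
  have "card {v,a,b,c} = 4" using card_nbrs[OF E2, of w] Nw reg4 wV by simp
  then have dw: "distinct [v,a,b,c]" by (rule card4_distinct)
  have "card {w,d,e,f} = 4" using card_nbrs[OF E2, of v] Nv reg4 vV by simp
  then have dv: "distinct [w,d,e,f]" by (rule card4_distinct)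
  have ew: "{w,a} \<in> E" "{w,b} \<in> E" "{w,c} \<in> E" using Nw by (auto simp: nbrs_def set_eq_iff)
  have ev: "{v,d} \<in> E" "{v,e} \<in> E" "{v,f} \<in> E" using Nv by (auto simp: nbrs_def set_eq_iff)
  have disj: "{a,b,c} \<inter> {d,e,f} = {}" using nocommon Nw Nv by auto
  have inR: "{a,b,c,d,e,f} \<subseteq> VR" using ew ev edgV dw dv unfolding VR_def by auto
  have p1sub: "p1 \<subseteq> {a,b,c,d,e,f}" using p1 by auto
  have xp1: "x \<in> p1" using p1 by auto
  have cp1: "card p1 = 4"
  proof -
    from p1 consider "p1 = {a,b,c,x}" "x \<in> {d,e,f}" | "p1 = {d,e,f,x}" "x \<in> {a,b,c}" by blast
    then show ?thesis
    proof cases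
      case 1
      then have "x \<notin> {a,b,c}" using disj by auto
      then show ?thesis using 1 dw by (auto simp: card_insert_if)
    next
      case 2
      then have "x \<notin> {d,e,f}" using disj by auto
      then show ?thesis using 2 dv by (auto simp: card_insert_if)
    qed
  qed
  have ow: "\<And>u. u \<in> p1 \<Longrightarrow> \<exists>ov. ov \<in> {v,w} \<and> {u,ov} \<in> E"
  proof -
    fix u assume "u \<in> p1"
    then have "u \<in> {a,b,c,d,e,f}" using p1sub by auto
    then show "\<exists>ov. ov \<in> {v,w} \<and> {u,ov} \<in> E" using ew ev by (auto simp: insert_commute)
  qed
  have vtsub: "Vt \<subseteq> VR" by (auto simp: Vt_def comp_def)
  have p1Vt: "p1 \<subseteq> Vt"
  proof -
    from C obtain z where z: "z \<in> VR" "p1 \<subseteq> comp VR F z" by (auto simp: components_def)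
    then have zx: "(z,x) \<in> (adjrel F)\<^sup>*" using xp1 by (auto simp: comp_def)
    show ?thesis
    proof
      fix q assume "q \<in> p1"
      then have "q \<in> VR" "(z,q) \<in> (adjrel F)\<^sup>*" using z by (auto simp: comp_def)
      moreover have "(x,q) \<in> (adjrel F)\<^sup>*" using rtrancl_trans[OF rt_sym[OF zx] calculation(2)] .
      ultimately show "q \<in> Vt" by (simp add: Vt_def comp_def)
    qed
  qed
  have ER_sub: "ER \<subseteq> E" by (auto simp: ER_def)
  have loc: "tsetup Vt Et p1 x"
  proof
    show "finite Vt" using vtsub finV finite_subset by (auto simp: VR_def)
  next
    fix g assume g: "g \<in> Et"
    then have "g \<in> E" "g \<subseteq> Vt" using TF ER_sub by (auto simp: Et_def)
    then show "\<exists>u z. u \<noteq> z \<and> u \<in> Vt \<and> z \<in> Vt \<and> g = {u,z}" using Eedg by blast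
  next
    fix u assume u: "u \<in> Vt"
    then have xu: "(x,u) \<in> (adjrel F)\<^sup>*" by (simp add: Vt_def comp_def)
    have "(x,u) \<in> (adjrel {g\<in>F. g \<subseteq> Vt})\<^sup>*"
    proof (rule restrict[OF xu])
      fix p q assume pq: "{p,q} \<in> F" "(x,p) \<in> (adjrel F)\<^sup>*" "(x,q) \<in> (adjrel F)\<^sup>*"
      then have "{p,q} \<in> ER" using TF by auto
      then have "p \<in> VR" "q \<in> VR" using edgV unfolding ER_def VR_def by auto
      then show "{p,q} \<subseteq> Vt" using pq by (simp add: Vt_def comp_def)
    qed
    then show "(x,u) \<in> (adjrel Et)\<^sup>*" by (simp add: Et_def)
  next
    show "acyclic_edges Et" using acyc_mono[OF TF(5)] by (auto simp: Et_def)
  next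
    show "x \<in> p1" by (rule xp1)
  next
    show "p1 \<subseteq> Vt" by (rule p1Vt)
  next
    show "card p1 = 4" by (rule cp1)
  next
    have Tedge: "\<exists>s. {u,s} \<in> T" if u: "u \<in> Vt" for u
    proof -
      have "p1 - {u} \<noteq> {}"
      proof
        assume "p1 - {u} = {}"
        then have "p1 \<subseteq> {u}" by blast
        then have "card p1 \<le> 1" using card_mono[of "{u}" p1] by simp
        with cp1 show False by simp
      qed
      then obtain u' where u': "u' \<in> p1" "u' \<noteq> u" by blast
      have "(u,u') \<in> (adjrel T)\<^sup>*" using TF(3) u u' vtsub p1Vt unfolding connected_graph_def by blast
      then obtain s where "(u,s) \<in> adjrel T" using u'(2) by (metis converse_rtranclE)
      then show ?thesis by (auto simp: adjrel_def)
    qed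
    have degub: "{g\<in>Et. u\<in>g} \<subseteq> {g\<in>E. u\<in>g} - ({{u,s}} \<union> {h. h \<in> E - ER})" if "{u,s} \<in> T" for u s
      using that TF ER_sub by (auto simp: Et_def)
    {
      fix u assume u: "u \<in> p1"
      then have uV: "u \<in> Vt" using p1Vt by auto
      obtain s where s: "{u,s} \<in> T" using Tedge uV by blast
      obtain ov where ov: "ov \<in> {v,w}" "{u,ov} \<in> E" using ow u by blast
      have "{u,ov} \<notin> ER" using ov by (auto simp: ER_def)
      then have "{g\<in>Et. u\<in>g} \<subseteq> {g\<in>E. u\<in>g} - {{u,s},{u,ov}}" using degub[OF s] ov by auto
      moreover have "{{u,s},{u,ov}} \<subseteq> {g\<in>E. u\<in>g}" using s ov TF ER_sub by auto
      moreover have "card {{u,s},{u,ov}} = 2"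
      proof -
        have "{u,s} \<noteq> {u,ov}" using s TF \<open>{u,ov} \<notin> ER\<close> by auto
        then show ?thesis by simp
      qed
      moreover have "card {g\<in>E. u\<in>g} = 4" using reg4 uV vtsub unfolding deg_def VR_def by auto
      ultimately have "card {g\<in>Et. u\<in>g} \<le> 2"
        using card_mono[of "{g\<in>E. u\<in>g} - {{u,s},{u,ov}}" "{g\<in>Et. u\<in>g}"] finE
          card_Diff_subset[of "{{u,s},{u,ov}}" "{g\<in>E. u\<in>g}"] by simp
      then show "deg Et u \<le> 2" by (simp add: deg_def)
    }
    {
      fix u assume uV: "u \<in> Vt"
      obtain s where s: "{u,s} \<in> T" using Tedge uV by blast
      have "{g\<in>Et. u\<in>g} \<subseteq> {g\<in>E. u\<in>g} - {{u,s}}" using degub[OF s] by auto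
      moreover have "{u,s} \<in> {g\<in>E. u\<in>g}" using s TF ER_sub by auto
      moreover have "card {g\<in>E. u\<in>g} = 4" using reg4 uV vtsub unfolding deg_def VR_def by auto
      ultimately have "card {g\<in>Et. u\<in>g} \<le> 3"
        using card_mono[of "{g\<in>E. u\<in>g} - {{u,s}}" "{g\<in>Et. u\<in>g}"] finE
          card_Diff_singleton[of "{u,s}" "{g\<in>E. u\<in>g}"] by simp
      then show "deg Et u \<le> 3" by (simp add: deg_def)
    }
  qed
  interpret tsetup Vt Et p1 x by (rule loc)
  have m: "\<exists>!y. G1 y \<and> G2 y \<and> G3 y" by (rule main)
  have m2: "\<exists>!y. ((y \<in> p1 \<and> deg Et y = 2) \<or> (y \<notin> p1 \<and> deg Et y = 3)) \<and>
                 (\<exists>C1\<in>components (Vt - {y}) {g \<in> Et. y \<notin> g}.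
                    \<exists>C2\<in>components (Vt - {y}) {g \<in> Et. y \<notin> g}.
                       card (C1 \<inter> p1) = 2 \<and> card (C2 \<inter> p1) = 1) \<and>
                 (x = y \<or> (\<exists>C\<in>components (Vt - {y}) {g \<in> Et. y \<notin> g}.
                             x \<in> C \<and> card (C \<inter> p1) = 1))"
    using m unfolding G1_def G2_def G3_def cs_def Ey_def .
  show ?thesis
    using m2 unfolding Let_def Vt_def Et_def VR_def .
qed


end
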